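(* In the two-bus model of the context, let $\Omega$ be the set of all instances $\boldsymbol\omega=(\overline{\mathbf q},\mathbf d)$ with $\overline{\mathbf q},\mathbf d\ge 0$, $d_1+d_2>0$, that are feasible for both \textsf{ED-2b} and \textsf{SCED-2b}. Then $$\mathsf{PoS}:=\sup_{\boldsymbol\omega\in\Omega}\mathsf{PoS}(\boldsymbol\omega)=\frac{\alpha_2}{\alpha_1}-\frac{(\alpha_2-\alpha_1)f^{\mathsf{sc}}}{\alpha_1 f^{\mathsf{ed}}},$$ and this value is attained by any instance with $d_1=0$, $d_2=f^{\mathsf{ed}}$, $\overline q_1\ge f^{\mathsf{ed}}$, and $\overline q_2\ge f^{\mathsf{ed}}-f^{\mathsf{sc}}$.
   Context: Two-bus network: buses $v_1,v_2$ joined by two parallel lines $e_1,e_2$ with susceptances $B_1,B_2>0$ and thermal limits $\overline f_1,\overline f_2>0$. Bus $i\in\{1,2\}$ has a generator with capacity $\overline q_i\ge 0$ and linear cost $\alpha_i q_i$, and a demand $d_i\ge 0$; throughout $0<\alpha_1\le\alpha_2$ (bus 1 is the cheap bus). An instance is $\boldsymbol\omega=(\overline{\mathbf q},\mathbf d)$ with $\overline{\mathbf q}=(\overline q_1,\overline q_2)$, $\mathbf d=(d_1,d_2)$. Define $f^{\mathsf{ed}}:=(B_1+B_2)\min\{\overline f_1/B_1,\overline f_2/B_2\}$ and $f^{\mathsf{sc}}:=\min\{\overline f_1,\overline f_2\}$ (note $f^{\mathsf{sc}}\le f^{\mathsf{ed}}$). The economic dispatch problem \textsf{ED-2b} is: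 minimize $\alpha_1q_1+\alpha_2q_2$ over $(q_1,q_2)$ subject to $0\le q_1\le\overline q_1$, $0\le q_2\le\overline q_2$, $q_1+q_2=d_1+d_2$, and $-f^{\mathsf{ed}}\le q_1-d_1\le f^{\mathsf{ed}}$. The security-constrained problem \textsf{SCED-2b} is the same problem with the additional constraint $-f^{\mathsf{sc}}\le q_1-d_1\le f^{\mathsf{sc}}$. Let $c^\star_{\mathsf{ed}}(\boldsymbol\omega)$ and $c^\star_{\mathsf{sc}}(\boldsymbol\omega)$ be the optimal values of \textsf{ED-2b} and \textsf{SCED-2b} for an instance $\boldsymbol\omega$ feasible for both. The price of security of $\boldsymbol\omega$ is $\mathsf{PoS}(\boldsymbol\omega):=c^\star_{\mathsf{sc}}(\boldsymbol\omega)/c^\star_{\mathsf{ed}}(\boldsymbol\omega)$. *)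

theory Defs
  imports "HOL-Analysis.Analysis"
begin

text \<open>Two-bus network. Line parameters: susceptances B1 B2 and thermal limits fb1 fb2.\<close>

definition f_ed :: "real \<Rightarrow> real \<Rightarrow> real \<Rightarrow> real \<Rightarrow> real" where
  "f_ed B1 B2 fb1 fb2 = (B1 + B2) * min (fb1 / B1) (fb2 / B2)"

definition f_sc :: "real \<Rightarrow> real \<Rightarrow> real" where
  "f_sc fb1 fb2 = min fb1 fb2"

text \<open>Feasible set of the dispatch problem with transfer limit F, for an instance
  with capacities qb1 qb2 and demands d1 d2. ED-2b uses F = f_ed; SCED-2b adds the
  constraint with f_sc, and since f_sc \<le> f_ed its feasible set is the one with
  both constraints.\<close>

definition ed_feasible :: "real \<Rightarrow> real \<Rightarrow> real \<Rightarrow> real \<Rightarrow> real \<Rightarrow> real \<Rightarrow> real \<Rightarrow> real \<Rightarrow> (real \<times> real) set" where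
  "ed_feasible B1 B2 fb1 fb2 qb1 qb2 d1 d2 =
     {(q1, q2). 0 \<le> q1 \<and> q1 \<le> qb1 \<and> 0 \<le> q2 \<and> q2 \<le> qb2 \<and> q1 + q2 = d1 + d2 \<and>
        - f_ed B1 B2 fb1 fb2 \<le> q1 - d1 \<and> q1 - d1 \<le> f_ed B1 B2 fb1 fb2}"

definition sc_feasible :: "real \<Rightarrow> real \<Rightarrow> real \<Rightarrow> real \<Rightarrow> real \<Rightarrow> real \<Rightarrow> real \<Rightarrow> real \<Rightarrow> (real \<times> real) set" where
  "sc_feasible B1 B2 fb1 fb2 qb1 qb2 d1 d2 =
     {(q1, q2). (q1, q2) \<in> ed_feasible B1 B2 fb1 fb2 qb1 qb2 d1 d2 \<and>
        - f_sc fb1 fb2 \<le> q1 - d1 \<and> q1 - d1 \<le> f_sc fb1 fb2}"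

definition c_ed :: "real \<Rightarrow> real \<Rightarrow> real \<Rightarrow> real \<Rightarrow> real \<Rightarrow> real \<Rightarrow> real \<Rightarrow> real \<Rightarrow> real \<Rightarrow> real \<Rightarrow> real" where
  "c_ed a1 a2 B1 B2 fb1 fb2 qb1 qb2 d1 d2 =
     Inf ((\<lambda>(q1, q2). a1 * q1 + a2 * q2) ` ed_feasible B1 B2 fb1 fb2 qb1 qb2 d1 d2)"

definition c_sc :: "real \<Rightarrow> real \<Rightarrow> real \<Rightarrow> real \<Rightarrow> real \<Rightarrow> real \<Rightarrow> real \<Rightarrow> real \<Rightarrow> real \<Rightarrow> real \<Rightarrow> real" where
  "c_sc a1 a2 B1 B2 fb1 fb2 qb1 qb2 d1 d2 =
     Inf ((\<lambda>(q1, q2). a1 * q1 + a2 * q2) ` sc_feasible B1 B2 fb1 fb2 qb1 qb2 d1 d2)"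

definition PoS :: "real \<Rightarrow> real \<Rightarrow> real \<Rightarrow> real \<Rightarrow> real \<Rightarrow> real \<Rightarrow> real \<Rightarrow> real \<Rightarrow> real \<Rightarrow> real \<Rightarrow> real" where
  "PoS a1 a2 B1 B2 fb1 fb2 qb1 qb2 d1 d2 =
     c_sc a1 a2 B1 B2 fb1 fb2 qb1 qb2 d1 d2 / c_ed a1 a2 B1 B2 fb1 fb2 qb1 qb2 d1 d2"

definition Omega :: "real \<Rightarrow> real \<Rightarrow> real \<Rightarrow> real \<Rightarrow> (real \<times> real \<times> real \<times> real) set" where
  "Omega B1 B2 fb1 fb2 =
     {(qb1, qb2, d1, d2). 0 \<le> qb1 \<and> 0 \<le> qb2 \<and> 0 \<le> d1 \<and> 0 \<le> d2 \<and> 0 < d1 + d2 \<and>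
        ed_feasible B1 B2 fb1 fb2 qb1 qb2 d1 d2 \<noteq> {} \<and>
        sc_feasible B1 B2 fb1 fb2 qb1 qb2 d1 d2 \<noteq> {}}"

end

theory Submission
  imports Defs
begin

lemma inf_lemma:
  fixes a1 a2 F qb1 qb2 d1 d2 :: real
  assumes "0 \<le> a1" "a1 \<le> a2" "Fs \<noteq> {}"
    and Fs: "Fs = {(q1,q2). 0\<le>q1 \<and> q1\<le>qb1 \<and> 0\<le>q2 \<and> q2\<le>qb2 \<and> q1+q2 = d1+d2 \<and> -F \<le> q1-d1 \<and> q1-d1 \<le> F}"
  shows "Inf ((\<lambda>(q1,q2). a1*q1+a2*q2) ` Fs) = a1*min qb1 (min (d1+F) (d1+d2)) + a2*(d1+d2-min qb1 (min (d1+F) (d1+d2)))"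
proof -
  define x where "x = min qb1 (min (d1+F) (d1+d2))"
  obtain p1 p2 where p: "(p1,p2) \<in> Fs" using assms(3) by auto
  have xin: "(x, d1+d2-x) \<in> Fs" using p unfolding Fs x_def by auto
  have le: "a1*x + a2*(d1+d2-x) \<le> a1*q1+a2*q2" if "(q1,q2) \<in> Fs" for q1 q2
  proof -
    have "q1 \<le> x" "q2 = d1+d2-q1" using that unfolding Fs x_def by auto
    have "(a2-a1)*(x-q1) \<ge> 0" using \<open>q1 \<le> x\<close> assms(2) by simp
    then have h2: "a1*x + a2*q1 \<le> a1*q1+a2*x" by (simp add: algebra_simps)
    have "a2*(q1+q2) = a2*(d1+d2)" using \<open>q2 = d1+d2-q1\<close> by simp
    then have h1: "a2*q1+a2*q2 = a2*d1+a2*d2" by (simp only: distrib_left)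
    have "a1*x + (a2*d1+a2*d2 - a2*x) \<le> a1*q1 + a2*q2" using h1 h2 by linarith
    thus ?thesis by (simp add: algebra_simps)
  qed
  show ?thesis unfolding x_def[symmetric]
    apply (rule cInf_eq_minimum)
    using xin apply force
    using le by auto
qed

lemma S_le_E:
  fixes B1 B2 fb1 fb2 :: real
  assumes "0 < B1" "0 < B2" "0 < fb1" "0 < fb2"
  shows "f_sc fb1 fb2 \<le> f_ed B1 B2 fb1 fb2" "0 < f_sc fb1 fb2"
proof -
  show "0 < f_sc fb1 fb2" using assms by (simp add: f_sc_def)
  show "f_sc fb1 fb2 \<le> f_ed B1 B2 fb1 fb2"
  proof (cases "fb1/B1 \<le> fb2/B2")
    case True
    then have "f_ed B1 B2 fb1 fb2 = fb1 + B2*(fb1/B1)" using assms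
      by (simp add: f_ed_def min_def field_simps)
    moreover have "B2*(fb1/B1) \<ge> 0" using assms by simp
    ultimately show ?thesis by (simp add: f_sc_def)
  next
    case False
    then have "f_ed B1 B2 fb1 fb2 = B1*(fb2/B2) + fb2" using assms
      by (simp add: f_ed_def min_def field_simps)
    moreover have "B1*(fb2/B2) \<ge> 0" using assms by simp
    ultimately show ?thesis by (simp add: f_sc_def)
  qed
qed

lemma ed_eq: "ed_feasible B1 B2 fb1 fb2 qb1 qb2 d1 d2 = {(q1,q2). 0\<le>q1 \<and> q1\<le>qb1 \<and> 0\<le>q2 \<and> q2\<le>qb2 \<and> q1+q2 = d1+d2 \<and> - f_ed B1 B2 fb1 fb2 \<le> q1-d1 \<and> q1-d1 \<le> f_ed B1 B2 fb1 fb2}"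
  by (simp add: ed_feasible_def)

lemma sc_eq: assumes "f_sc fb1 fb2 \<le> f_ed B1 B2 fb1 fb2"
  shows "sc_feasible B1 B2 fb1 fb2 qb1 qb2 d1 d2 = {(q1,q2). 0\<le>q1 \<and> q1\<le>qb1 \<and> 0\<le>q2 \<and> q2\<le>qb2 \<and> q1+q2 = d1+d2 \<and> - f_sc fb1 fb2 \<le> q1-d1 \<and> q1-d1 \<le> f_sc fb1 fb2}"
  using assms by (auto simp add: sc_feasible_def ed_feasible_def)

lemma key:
  fixes a1 a2 S E qb1 d1 d2 :: real
  assumes a: "0 < a1" "a1 \<le> a2" and SE: "0 < S" "S \<le> E" and d: "0 \<le> d1" "0 \<le> d2" "0 < d1 + d2"
  defines "xe \<equiv> min qb1 (min (d1+E) (d1+d2))" and "xs \<equiv> min qb1 (min (d1+S) (d1+d2))"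
  defines "ce \<equiv> a1*xe + a2*(d1+d2-xe)" and "cs \<equiv> a1*xs + a2*(d1+d2-xs)"
  shows "cs / ce \<le> (a2*E - (a2-a1)*S) / (a1*E)" and "0 < ce"
proof -
  define k where "k = a2 - a1"
  define N where "N = a2*E - k*S"
  define D where "D = d1 + d2"
  have k0: "k \<ge> 0" using a by (simp add: k_def)
  have E0: "E > 0" using SE by simp
  have ce_eq: "ce = a2*D - k*xe" unfolding ce_def k_def D_def by (simp add: algebra_simps)
  have cs_eq: "cs = a2*D - k*xs" unfolding cs_def k_def D_def by (simp add: algebra_simps)
  have xeD: "xe \<le> D" unfolding xe_def D_def by simp
  have "k*xe \<le> k*D" using xeD k0 by (simp add: mult_left_mono)
  then have ceD: "ce \<ge> a1*D" unfolding ce_eq k_def by (simp add: algebra_simps)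
  have "a1*D > 0" using a d unfolding D_def by simp
  then show cpos: "0 < ce" using ceD by linarith
  have NE: "N - a1*E = k*(E-S)" unfolding N_def k_def by (simp add: algebra_simps)
  have "k*(E-S) \<ge> 0" using k0 SE by simp
  then have Nge: "N \<ge> a1*E" using NE by linarith
  have main: "cs*(a1*E) \<le> N*ce"
  proof (cases "xs = xe")
    case True
    then have "cs = ce" unfolding cs_def ce_def by simp
    then show ?thesis using Nge cpos by (simp add: mult_right_mono mult.commute)
  next
    case False
    then have xs: "xs = d1 + S" unfolding xs_def xe_def using SE by (auto simp: min_def split: if_splits)
    define T where "T = a1*d1 + a2*d2"
    have cs2: "cs = T - k*S" unfolding cs_eq xs T_def D_def k_def by (simp add: algebra_simps)
    show ?thesis
    proof (cases "E \<le> d2")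
      case True
      have "xe \<le> d1 + E" unfolding xe_def by simp
      then have "k*xe \<le> k*(d1+E)" using k0 by (simp add: mult_left_mono)
      then have ceT: "ce \<ge> T - k*E" unfolding ce_eq T_def D_def k_def by (simp add: algebra_simps)
      have "N \<ge> 0" using Nge a E0 by (smt (verit) mult_pos_pos)
      then have h1: "N*ce \<ge> N*(T-k*E)" using ceT by (simp add: mult_left_mono)
      have id: "N*(T-k*E) - (T-k*S)*(a1*E) = k*(E-S)*(T-a2*E)"
        unfolding N_def k_def by (simp add: algebra_simps)
      have "a2*d2 \<ge> a2*E" using True a by (simp add: mult_left_mono)
      moreover have "a1*d1 \<ge> 0" using a d by simp
      ultimately have "T - a2*E \<ge> 0" unfolding T_def by linarith
      then have "k*(E-S)*(T-a2*E) \<ge> 0" using k0 SE by simp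
      moreover have "cs*(a1*E) = (T-k*S)*(a1*E)" using cs2 by simp
      ultimately show ?thesis using h1 id by linarith
    next
      case False
      have "N \<ge> 0" using Nge a E0 by (smt (verit) mult_pos_pos)
      then have h1: "N*ce \<ge> N*(a1*D)" using ceD by (simp add: mult_left_mono)
      have id: "N*(a1*D) - (T-k*S)*(a1*E) = a1*(k*d1*(E-S) + k*S*(E-d2))"
        unfolding N_def k_def T_def D_def by (simp add: algebra_simps)
      have "k*d1*(E-S) \<ge> 0" using k0 d SE by simp
      moreover have "k*S*(E-d2) \<ge> 0" using k0 SE False by simp
      ultimately have "a1*(k*d1*(E-S) + k*S*(E-d2)) \<ge> 0" using a by simp
      moreover have "cs*(a1*E) = (T-k*S)*(a1*E)" using cs2 by simp
      ultimately show ?thesis using h1 id by linarith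
    qed
  qed
  have "a1*E > 0" using a E0 by simp
  then have "cs / ce \<le> N / (a1*E)" using main cpos by (simp add: divide_simps mult.commute)
  then show "cs / ce \<le> (a2*E - (a2-a1)*S) / (a1*E)" unfolding N_def k_def .
qed

theorem theorem1:
  fixes a1 a2 B1 B2 fb1 fb2 :: real
  assumes "0 < a1" "a1 \<le> a2" "0 < B1" "0 < B2" "0 < fb1" "0 < fb2"
  shows "(SUP w \<in> Omega B1 B2 fb1 fb2.
            (case w of (qb1, qb2, d1, d2) \<Rightarrow> PoS a1 a2 B1 B2 fb1 fb2 qb1 qb2 d1 d2))
           = a2 / a1 - (a2 - a1) * f_sc fb1 fb2 / (a1 * f_ed B1 B2 fb1 fb2)
         \<and> (\<forall>qb1 qb2. f_ed B1 B2 fb1 fb2 \<le> qb1 \<longrightarrow>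
            f_ed B1 B2 fb1 fb2 - f_sc fb1 fb2 \<le> qb2 \<longrightarrow>
            (qb1, qb2, 0, f_ed B1 B2 fb1 fb2) \<in> Omega B1 B2 fb1 fb2 \<and>
            PoS a1 a2 B1 B2 fb1 fb2 qb1 qb2 0 (f_ed B1 B2 fb1 fb2)
              = a2 / a1 - (a2 - a1) * f_sc fb1 fb2 / (a1 * f_ed B1 B2 fb1 fb2))"
proof -
  define E where "E = f_ed B1 B2 fb1 fb2"
  define S where "S = f_sc fb1 fb2"
  have SE: "S \<le> E" "0 < S" using S_le_E assms unfolding E_def S_def by auto
  have bnd: "a2 / a1 - (a2 - a1) * S / (a1 * E) = (a2*E - (a2-a1)*S) / (a1*E)"
    using SE assms by (simp add: field_simps)
  have c_ed_eq: "c_ed a1 a2 B1 B2 fb1 fb2 qb1 qb2 d1 d2 = a1*min qb1 (min (d1+E) (d1+d2)) + a2*(d1+d2-min qb1 (min (d1+E) (d1+d2)))"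
    if "ed_feasible B1 B2 fb1 fb2 qb1 qb2 d1 d2 \<noteq> {}" for qb1 qb2 d1 d2
    unfolding c_ed_def E_def
    by (rule inf_lemma[OF _ _ that ed_eq]) (use assms in auto)
  have c_sc_eq: "c_sc a1 a2 B1 B2 fb1 fb2 qb1 qb2 d1 d2 = a1*min qb1 (min (d1+S) (d1+d2)) + a2*(d1+d2-min qb1 (min (d1+S) (d1+d2)))"
    if "sc_feasible B1 B2 fb1 fb2 qb1 qb2 d1 d2 \<noteq> {}" for qb1 qb2 d1 d2
    unfolding c_sc_def S_def
    by (rule inf_lemma[OF _ _ that sc_eq]) (use assms SE in \<open>auto simp: E_def S_def\<close>)
  have att: "(qb1, qb2, 0, E) \<in> Omega B1 B2 fb1 fb2 \<and>
            PoS a1 a2 B1 B2 fb1 fb2 qb1 qb2 0 E = (a2*E - (a2-a1)*S) / (a1*E)"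
    if "E \<le> qb1" "E - S \<le> qb2" for qb1 qb2
  proof -
    have "(E, 0) \<in> ed_feasible B1 B2 fb1 fb2 qb1 qb2 0 E"
      using that SE unfolding ed_feasible_def E_def by auto
    hence ne1: "ed_feasible B1 B2 fb1 fb2 qb1 qb2 0 E \<noteq> {}" by auto
    have "(S, E - S) \<in> sc_feasible B1 B2 fb1 fb2 qb1 qb2 0 E"
      using that SE unfolding sc_feasible_def ed_feasible_def E_def S_def by auto
    hence ne2: "sc_feasible B1 B2 fb1 fb2 qb1 qb2 0 E \<noteq> {}" by auto
    have "(qb1, qb2, 0, E) \<in> Omega B1 B2 fb1 fb2"
      using ne1 ne2 that SE unfolding Omega_def by auto
    moreover have "c_ed a1 a2 B1 B2 fb1 fb2 qb1 qb2 0 E = a1*E"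
      using c_ed_eq[OF ne1] that by (simp add: min_def)
    moreover have "c_sc a1 a2 B1 B2 fb1 fb2 qb1 qb2 0 E = a1*S + a2*(E-S)"
    proof -
      have m: "min qb1 (min (0+S) (0+E)) = S" using that SE by simp
      show ?thesis using c_sc_eq[OF ne2] m by simp
    qed
    ultimately show ?thesis unfolding PoS_def by (simp add: algebra_simps)
  qed
  have upper: "(case w of (qb1, qb2, d1, d2) \<Rightarrow> PoS a1 a2 B1 B2 fb1 fb2 qb1 qb2 d1 d2)
       \<le> (a2*E - (a2-a1)*S) / (a1*E)" if "w \<in> Omega B1 B2 fb1 fb2" for w
  proof -
    obtain qb1 qb2 d1 d2 where w: "w = (qb1, qb2, d1, d2)" by (cases w) auto
    have h: "0 \<le> d1" "0 \<le> d2" "0 < d1 + d2"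
      "ed_feasible B1 B2 fb1 fb2 qb1 qb2 d1 d2 \<noteq> {}" "sc_feasible B1 B2 fb1 fb2 qb1 qb2 d1 d2 \<noteq> {}"
      using that unfolding w Omega_def by auto
    show ?thesis unfolding w PoS_def using c_ed_eq[OF h(4)] c_sc_eq[OF h(5)]
      key(1)[OF assms(1,2) SE(2) SE(1) h(1,2,3), of qb1] by simp
  qed
  have E_ge: "E \<le> E" "E - S \<le> E" using SE by auto
  have sup: "(SUP w \<in> Omega B1 B2 fb1 fb2.
            (case w of (qb1, qb2, d1, d2) \<Rightarrow> PoS a1 a2 B1 B2 fb1 fb2 qb1 qb2 d1 d2))
         = (a2*E - (a2-a1)*S) / (a1*E)"
  proof (rule cSup_eq_maximum)
    show "(a2*E - (a2-a1)*S) / (a1*E) \<in> (\<lambda>w. case w of (qb1, qb2, d1, d2) \<Rightarrow> PoS a1 a2 B1 B2 fb1 fb2 qb1 qb2 d1 d2) ` Omega B1 B2 fb1 fb2"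
      using att[OF E_ge] by (metis (no_types, lifting) case_prod_conv image_eqI)
    show "\<And>x. x \<in> (\<lambda>w. case w of (qb1, qb2, d1, d2) \<Rightarrow> PoS a1 a2 B1 B2 fb1 fb2 qb1 qb2 d1 d2) ` Omega B1 B2 fb1 fb2 \<Longrightarrow> x \<le> (a2*E - (a2-a1)*S) / (a1*E)"
      using upper by blast
  qed
  show ?thesis
    unfolding E_def[symmetric] S_def[symmetric] bnd
    using sup att by blast
qed

end
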